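(* Let $S$ be a finite state set, $A$ a finite action-profile set and $q$ a transition kernel such that for every pure Markov strategy profile $\mathbf a=(a_s)_s\in A^{|S|}$ the matrix $(q(t\mid s,a_s))_{s,t}$ is irreducible; let $\pi(\mathbf a)=(\pi_s(\mathbf a))_{s\in S}$ be its unique invariant distribution. Let $\tilde\alpha:S\to\mathbb R^{|A|}$ satisfy $\sum_{a\in A}\tilde\alpha_s(a)=1$ for each $s$, and let $\tilde\beta\in\mathbb R^{|S|}$ satisfy $\sum_{s\in S}\sum_{a\in A}\tilde\beta_s\tilde\alpha_s(a)q(t\mid s,a)=\tilde\beta_t$ for every $t\in S$. Then there exists $k:A^{|S|}\to\mathbb R$ such that $$\tilde\beta_s\tilde\alpha_s(a)=\sum_{\mathbf a=(a_{s'})_{s'}\in A^{|S|}:\,a_s=a}k(\mathbf a)\,\pi_s(\mathbf a)\quad\text{for all } s\in S,\ a\in A.$$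
   Context: The entries $\tilde\alpha_s(a)$ may be negative. *)

theory Defs
  imports Complex_Main
begin

text \<open>A transition kernel: q s a t is the probability q(t | s, a).\<close>
definition transition_kernel :: "('s::finite \<Rightarrow> 'a \<Rightarrow> 's \<Rightarrow> real) \<Rightarrow> bool" where
  "transition_kernel q \<longleftrightarrow> (\<forall>s a t. q s a t \<ge> 0) \<and> (\<forall>s a. (\<Sum>t\<in>UNIV. q s a t) = 1)"

definition irreducible_matrix :: "('s::finite \<Rightarrow> 's \<Rightarrow> real) \<Rightarrow> bool" where
  "irreducible_matrix P \<longleftrightarrow> (\<forall>s t. (s, t) \<in> {(x, y). P x y > 0}\<^sup>+)"

definition profile_matrix :: "('s \<Rightarrow> 'a \<Rightarrow> 's \<Rightarrow> real) \<Rightarrow> ('s \<Rightarrow> 'a) \<Rightarrow> 's \<Rightarrow> 's \<Rightarrow> real" where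
  "profile_matrix q as s t = q s (as s) t"

definition invariant_distribution :: "('s::finite \<Rightarrow> 's \<Rightarrow> real) \<Rightarrow> ('s \<Rightarrow> real) \<Rightarrow> bool" where
  "invariant_distribution P p \<longleftrightarrow> (\<forall>s. p s \<ge> 0) \<and> (\<Sum>s\<in>UNIV. p s) = 1
     \<and> (\<forall>t. (\<Sum>s\<in>UNIV. p s * P s t) = p t)"

end

theory Submission
  imports Defs
begin

lemma propagate:
  fixes P :: "'s::finite \<Rightarrow> 's \<Rightarrow> real" and w :: "'s \<Rightarrow> real"
  assumes Pnn: "\<And>s t. P s t \<ge> 0" and wnn: "\<And>s. w s \<ge> 0"
    and winv: "\<And>t. (\<Sum>s\<in>UNIV. w s * P s t) = w t"
    and path: "(s, t) \<in> {(x, y). P x y > 0}\<^sup>+"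
  shows "w t = 0 \<Longrightarrow> w s = 0"
  using path
proof (induction rule: trancl_induct)
  case (base y)
  have "(\<Sum>s'\<in>UNIV. w s' * P s' y) = 0" using winv base by simp
  moreover have "\<forall>s'\<in>UNIV. w s' * P s' y \<ge> 0" using Pnn wnn by simp
  ultimately have "w s * P s y = 0" by (simp add: sum_nonneg_eq_0_iff)
  with base show ?case by auto
next
  case (step y z)
  have "(\<Sum>s'\<in>UNIV. w s' * P s' z) = 0" using winv step by simp
  moreover have "\<forall>s'\<in>UNIV. w s' * P s' z \<ge> 0" using Pnn wnn by simp
  ultimately have "w y * P y z = 0" by (simp add: sum_nonneg_eq_0_iff)
  with step show ?case by auto
qed

lemma pi_pos:
  fixes P :: "'s::finite \<Rightarrow> 's \<Rightarrow> real"
  assumes Pnn: "\<And>s t. P s t \<ge> 0" and irr: "irreducible_matrix P"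
    and inv: "invariant_distribution P p"
  shows "p s > 0"
proof (rule ccontr)
  assume "\<not> p s > 0"
  moreover have "p s \<ge> 0" using inv unfolding invariant_distribution_def by blast
  ultimately have ps: "p s = 0" by simp
  have "\<forall>s'. p s' = 0"
  proof
    fix s'
    show "p s' = 0"
      using propagate[of P p s' s] Pnn inv irr ps
      unfolding invariant_distribution_def irreducible_matrix_def by blast
  qed
  with inv show False unfolding invariant_distribution_def by simp
qed

lemma unique_inv:
  fixes P :: "'s::finite \<Rightarrow> 's \<Rightarrow> real"
  assumes Pnn: "\<And>s t. P s t \<ge> 0" and irr: "irreducible_matrix P"
    and inv: "invariant_distribution P p"
    and zinv: "\<And>t. (\<Sum>s\<in>UNIV. z s * P s t) = z t"
  shows "\<exists>c. \<forall>s. z s = c * p s"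
proof -
  have pp: "\<And>s. p s > 0" using pi_pos[OF Pnn irr inv] .
  define c where "c = Min (range (\<lambda>s. z s / p s))"
  have cle: "\<And>s. c \<le> z s / p s" unfolding c_def by simp
  obtain s0 where s0: "c = z s0 / p s0"
  proof -
    have "c \<in> range (\<lambda>s. z s / p s)" unfolding c_def by (rule Min_in) auto
    then show ?thesis using that by auto
  qed
  define w where "w s = z s - c * p s" for s
  have wnn: "\<And>s. w s \<ge> 0"
    using cle pp unfolding w_def by (simp add: pos_le_divide_eq)
  have pinv: "\<And>t. (\<Sum>s\<in>UNIV. p s * P s t) = p t"
    using inv unfolding invariant_distribution_def by blast
  have winv: "\<And>t. (\<Sum>s\<in>UNIV. w s * P s t) = w t"
  proof -
    fix t
    have "(\<Sum>s\<in>UNIV. w s * P s t) = (\<Sum>s\<in>UNIV. z s * P s t) - c * (\<Sum>s\<in>UNIV. p s * P s t)"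
      unfolding w_def by (simp add: algebra_simps sum_subtractf sum_distrib_left)
    then show "(\<Sum>s\<in>UNIV. w s * P s t) = w t" using zinv pinv unfolding w_def by simp
  qed
  have w0: "w s0 = 0" using s0 pp[of s0] unfolding w_def by simp
  have "\<forall>s. w s = 0"
    using propagate[OF Pnn wnn winv] w0 irr unfolding irreducible_matrix_def by blast
  then show ?thesis unfolding w_def by auto
qed

lemma regroup:
  fixes h :: "('s::finite \<Rightarrow> 'a::finite) \<Rightarrow> 'a \<Rightarrow> real"
  shows "(\<Sum>a\<in>UNIV. \<Sum>as\<in>{as. as s = a}. h as a) = (\<Sum>as\<in>UNIV. h as (as s))"
proof -
  have "(\<Sum>a\<in>UNIV. \<Sum>as\<in>{as. as s = a}. h as a)
      = (\<Sum>a\<in>UNIV. \<Sum>as\<in>UNIV. if as s = a then h as a else 0)"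
    by (rule sum.cong, simp, subst sum.inter_filter[symmetric], auto)
  also have "\<dots> = (\<Sum>as\<in>UNIV. \<Sum>a\<in>UNIV. if as s = a then h as a else 0)"
    by (rule sum.swap)
  also have "\<dots> = (\<Sum>as\<in>UNIV. h as (as s))"
    by (simp add: eq_commute[of "_ s"])
  finally show ?thesis .
qed

lemma flowL:
  fixes q :: "'s::finite \<Rightarrow> 'a::finite \<Rightarrow> 's \<Rightarrow> real"
    and pi :: "('s \<Rightarrow> 'a) \<Rightarrow> 's \<Rightarrow> real" and k :: "('s \<Rightarrow> 'a) \<Rightarrow> real"
  assumes inv: "\<And>as. invariant_distribution (profile_matrix q as) (pi as)"
  shows "(\<Sum>s\<in>UNIV. \<Sum>a\<in>UNIV. (\<Sum>as\<in>{as. as s = a}. k as * pi as s) * q s a t)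
     = (\<Sum>a\<in>UNIV. \<Sum>as\<in>{as. as t = a}. k as * pi as t)"
proof -
  have "(\<Sum>s\<in>UNIV. \<Sum>a\<in>UNIV. (\<Sum>as\<in>{as. as s = a}. k as * pi as s) * q s a t)
      = (\<Sum>s\<in>UNIV. \<Sum>a\<in>UNIV. \<Sum>as\<in>{as. as s = a}. k as * pi as s * q s a t)"
    by (simp add: sum_distrib_right)
  also have "\<dots> = (\<Sum>s\<in>UNIV. \<Sum>as\<in>UNIV. k as * pi as s * q s (as s) t)"
    by (simp add: regroup[of "\<lambda>as a. k as * pi as _ * q _ a t"])
  also have "\<dots> = (\<Sum>as\<in>UNIV. k as * (\<Sum>s\<in>UNIV. pi as s * q s (as s) t))"
    by (subst sum.swap) (simp add: sum_distrib_left mult.assoc)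
  also have "\<dots> = (\<Sum>as\<in>UNIV. k as * pi as t)"
    using inv unfolding invariant_distribution_def profile_matrix_def by simp
  also have "\<dots> = (\<Sum>a\<in>UNIV. \<Sum>as\<in>{as. as t = a}. k as * pi as t)"
    by (rule regroup[symmetric])
  finally show ?thesis .
qed

theorem mainTheorem4:
  fixes q :: "'s::finite \<Rightarrow> 'a::finite \<Rightarrow> 's \<Rightarrow> real"
    and pi :: "('s \<Rightarrow> 'a) \<Rightarrow> 's \<Rightarrow> real"
    and alpha :: "'s \<Rightarrow> 'a \<Rightarrow> real"
    and beta :: "'s \<Rightarrow> real"
  assumes kernel: "transition_kernel q"
    and irred: "\<And>as. irreducible_matrix (profile_matrix q as)"
    and inv: "\<And>as. invariant_distribution (profile_matrix q as) (pi as)"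
    and alpha_sum: "\<And>s. (\<Sum>a\<in>UNIV. alpha s a) = 1"
    and beta_inv: "\<And>t. (\<Sum>s\<in>UNIV. \<Sum>a\<in>UNIV. beta s * alpha s a * q s a t) = beta t"
  shows "\<exists>k :: ('s \<Rightarrow> 'a) \<Rightarrow> real. \<forall>s a.
           beta s * alpha s a = (\<Sum>as\<in>{as. as s = a}. k as * pi as s)"
proof -
  define L where "L k s a = (\<Sum>as\<in>{as. as s = a}. k as * pi as s)" for k s a
  define x where "x s a = beta s * alpha s a" for s a
  have Pnn: "\<And>as s t. profile_matrix q as s t \<ge> 0"
    using kernel unfolding transition_kernel_def profile_matrix_def by simp
  have pp: "\<And>as s. pi as s > 0" using pi_pos[OF Pnn irred inv] .
  have flowx: "\<And>t. (\<Sum>s\<in>UNIV. \<Sum>a\<in>UNIV. x s a * q s a t) = (\<Sum>a\<in>UNIV. x t a)"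
    using beta_inv alpha_sum unfolding x_def by (simp add: sum_distrib_left[symmetric])
  have flowL: "\<And>k t. (\<Sum>s\<in>UNIV. \<Sum>a\<in>UNIV. L k s a * q s a t) = (\<Sum>a\<in>UNIV. L k t a)"
    unfolding L_def using flowL[OF inv] .
  obtain b :: "'s \<Rightarrow> 'a" where True by simp
  define k' where "k' as = (\<Sum>s\<in>UNIV. \<Sum>a\<in>UNIV.
      if a \<noteq> b s \<and> as = b(s:=a) then x s a / pi as s else 0)" for as
  have k'val: "k' as = (if as = b(t:=e) then x t e / pi as t else 0)"
    if "as t = e" "e \<noteq> b t" for as t e
  proof -
    have eqv: "(a \<noteq> b s \<and> as = b(s:=a)) \<longleftrightarrow> (as = b(t:=e) \<and> s = t \<and> a = e)" for s a
    proof
      assume h: "a \<noteq> b s \<and> as = b(s:=a)"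
      then have "s = t" using that by (cases "s = t") auto
      with h that show "as = b(t:=e) \<and> s = t \<and> a = e" by auto
    next
      assume "as = b(t:=e) \<and> s = t \<and> a = e"
      with that show "a \<noteq> b s \<and> as = b(s:=a)" by auto
    qed
    have "k' as = (\<Sum>s\<in>UNIV. \<Sum>a\<in>UNIV.
      if as = b(t:=e) \<and> s = t \<and> a = e then x s a / pi as s else 0)"
      unfolding k'_def by (simp only: eqv)
    also have "\<dots> = (if as = b(t:=e) then x t e / pi as t else 0)"
    proof (cases "as = b(t:=e)")
      case True
      have "(\<Sum>s\<in>UNIV. \<Sum>a\<in>UNIV. if s = t \<and> a = e then x s a / pi as s else 0)
          = (\<Sum>s\<in>UNIV. if s = t then (\<Sum>a\<in>UNIV. if a = e then x s a / pi as s else 0) else 0)"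
        by (rule sum.cong) auto
      also have "\<dots> = x t e / pi as t" by (simp add: sum.delta')
      finally show ?thesis using True by simp
    qed simp
    finally show ?thesis .
  qed
  have Lk': "L k' t e = x t e" if "e \<noteq> b t" for t e
  proof -
    have "L k' t e = (\<Sum>as\<in>{as. as t = e}. (if as = b(t:=e) then x t e / pi as t else 0) * pi as t)"
      unfolding L_def by (rule sum.cong) (auto simp: k'val that)
    also have "\<dots> = (\<Sum>as\<in>{as. as t = e}. (if as = b(t:=e) then x t e else 0))"
      by (rule sum.cong) (auto simp: pp less_imp_neq[OF pp, symmetric])
    also have "\<dots> = x t e" by (simp add: sum.delta')
    finally show ?thesis .
  qed
  define y where "y s a = x s a - L k' s a" for s a
  have flowy: "\<And>t. (\<Sum>s\<in>UNIV. \<Sum>a\<in>UNIV. y s a * q s a t) = (\<Sum>a\<in>UNIV. y t a)"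
    using flowx flowL unfolding y_def by (simp add: left_diff_distrib sum_subtractf)
  have y0: "y t e = 0" if "e \<noteq> b t" for t e using Lk'[OF that] unfolding y_def by simp
  have ysum: "(\<Sum>a\<in>UNIV. y t a) = y t (b t)" for t
    by (subst sum.remove[of _ "b t"]) (auto intro!: sum.neutral simp: y0)
  have ysum2: "(\<Sum>a\<in>UNIV. y s a * q s a t) = y s (b s) * q s (b s) t" for s t
    by (subst sum.remove[of _ "b s"]) (auto intro!: sum.neutral simp: y0)
  have zinv: "(\<Sum>s\<in>UNIV. y s (b s) * profile_matrix q b s t) = y t (b t)" for t
    using flowy[of t] unfolding profile_matrix_def by (simp add: ysum ysum2)
  obtain c where c: "\<And>s. y s (b s) = c * pi b s"
    using unique_inv[OF Pnn irred inv zinv] by blast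
  define k where "k as = (if as = b then c else 0) + k' as" for as
  have "L k t e = (if b t = e then c * pi b t else 0) + L k' t e" for t e
  proof -
    have "L k t e = (\<Sum>as\<in>{as. as t = e}. (if as = b then c * pi b t else 0)) + L k' t e"
      unfolding L_def k_def distrib_right sum.distrib
      by (rule arg_cong2[where f="(+)"], rule sum.cong) auto
    then show ?thesis by (simp add: sum.delta')
  qed
  then have "L k t e = x t e" for t e
    using c[of t] Lk'[of e t] unfolding y_def by (cases "e = b t") auto
  then show ?thesis unfolding L_def x_def by metis
qed

end
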